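(* Let $V$ be a vertex algebra and $M$ a subspace of $V$ containing $C_2(V)$ such that $M/C_2(V)$ is an ideal of the commutative associative algebra $V/C_2(V)$. Then $M$ is an $MZ_{0,-1}$-subspace of $V$.
   Context: A vertex algebra $(V,Y,\mathbf{1})$ is over $\mathbb{C}$; for $u\in V$ write $Y(u,z)=\sum_{n\in\mathbb{Z}}u_nz^{-n-1}$ with $u_n\in\operatorname{End}V$. Iterated products are nested to the right: $v_{n_1}\cdots v_{n_t}v=v_{n_1}(\cdots(v_{n_t}v))$. $C_2(V)=\operatorname{span}_{\mathbb{C}}\{u_{-2}v: u,v\in V\}$; $V/C_2(V)$ is a commutative associative unital algebra with product $(a+C_2(V))(b+C_2(V))=a_{-1}b+C_2(V)$. For a subspace $M\subseteq V$: $r_{0,-1}(M)$ is the set of $v\in V$ for which there is $m\ge 0$ with $v_{n_1}\cdots v_{n_t}v\in M$ for all $t\ge m$ and all $n_1,\dots,n_t\in\{0,-1\}$. $lsr_{0,-1}(M)$ is the set of $v\in V$ such that for every $b\in V$ there is $m\ge0$ with $b_sv_{n_1}\cdots v_{n_t}v\in M$ for all $t\ge m$ and all $s,n_1,\dots,n_t\in\{0,-1\}$. $rsr_{0,-1}(M)$ is the set of $v\in V$ such that for every $w\in V$ there is $m\ge 0$ with $(v_{n_1}\cdots v_{n_t}v)_nw\in M$ for all $t\ge m$ and all $n,n_1,\dots,n_t\in\{0,-1\}$. $sr_{0,-1}(M)=lsr_{0,-1}(M)\cap rsr_{0,-1}(M)$. $M$ is an $MZ_{0,-1}$-subspace of $V$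 if $r_{0,-1}(M)=sr_{0,-1}(M)$. *)

theory Defs
  imports Complex_Main
begin

text \<open>Y u n v stands for the mode u_n applied to v (u_n v).\<close>

definition fsum :: "(nat \<Rightarrow> 'v::ab_group_add) \<Rightarrow> 'v" where
  "fsum f = (\<Sum>i\<in>{i. f i \<noteq> 0}. f i)"

definition vertex_algebra ::
  "(complex \<Rightarrow> 'v::ab_group_add \<Rightarrow> 'v) \<Rightarrow> ('v \<Rightarrow> int \<Rightarrow> 'v \<Rightarrow> 'v) \<Rightarrow> 'v \<Rightarrow> bool" where
  "vertex_algebra sc Y vac \<longleftrightarrow>
     vector_space sc \<and>
     (\<forall>u n. Vector_Spaces.linear sc sc (Y u n)) \<and>
     (\<forall>v n. Vector_Spaces.linear sc sc (\<lambda>u. Y u n v)) \<and>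
     (\<forall>u v. \<exists>N. \<forall>n\<ge>N. Y u n v = 0) \<and>
     (\<forall>n v. Y vac n v = (if n = -1 then v else 0)) \<and>
     (\<forall>u. Y u (-1) vac = u) \<and>
     (\<forall>u n. n \<ge> 0 \<longrightarrow> Y u n vac = 0) \<and>
     (\<forall>u v w m n l.
        fsum (\<lambda>i. sc ((of_int m) gchoose i) (Y (Y u (l + int i) v) (m + n - int i) w))
        = fsum (\<lambda>i. sc ((-1) ^ i * ((of_int l) gchoose i))
              (Y u (m + l - int i) (Y v (n + int i) w)
               - sc ((-1) powi l) (Y v (n + l - int i) (Y u (m + int i) w)))))"

definition C2 :: "(complex \<Rightarrow> 'v::ab_group_add \<Rightarrow> 'v) \<Rightarrow> ('v \<Rightarrow> int \<Rightarrow> 'v \<Rightarrow> 'v) \<Rightarrow> 'v set" where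
  "C2 sc Y = module.span sc {Y u (-2) v | u v. True}"

text \<open>For a subspace M containing C_2(V), M/C_2(V) is an ideal of the commutative
  associative algebra V/C_2(V) (product induced by a_{-1}b) iff M is closed under
  left multiplication a_{-1}(-) by arbitrary a in V.\<close>
definition quotient_ideal ::
  "(complex \<Rightarrow> 'v::ab_group_add \<Rightarrow> 'v) \<Rightarrow> ('v \<Rightarrow> int \<Rightarrow> 'v \<Rightarrow> 'v) \<Rightarrow> 'v set \<Rightarrow> bool" where
  "quotient_ideal sc Y M \<longleftrightarrow> (\<forall>a m. m \<in> M \<longrightarrow> Y a (-1) m \<in> M)"

text \<open>iter Y v [n1,...,nt] = v_{n1}(v_{n2}(...(v_{nt} v)))\<close>
definition iter :: "('v \<Rightarrow> int \<Rightarrow> 'v \<Rightarrow> 'v) \<Rightarrow> 'v \<Rightarrow> int list \<Rightarrow> 'v" where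
  "iter Y v ns = foldr (\<lambda>n x. Y v n x) ns v"

definition r01 :: "('v \<Rightarrow> int \<Rightarrow> 'v \<Rightarrow> 'v) \<Rightarrow> 'v set \<Rightarrow> 'v set" where
  "r01 Y M = {v. \<exists>m::nat. \<forall>ns. length ns \<ge> m \<and> set ns \<subseteq> {0, -1} \<longrightarrow> iter Y v ns \<in> M}"

definition lsr01 :: "('v \<Rightarrow> int \<Rightarrow> 'v \<Rightarrow> 'v) \<Rightarrow> 'v set \<Rightarrow> 'v set" where
  "lsr01 Y M = {v. \<forall>b. \<exists>m::nat. \<forall>s ns. s \<in> {0, -1} \<and> length ns \<ge> m \<and> set ns \<subseteq> {0, -1}
                     \<longrightarrow> Y b s (iter Y v ns) \<in> M}"

definition rsr01 :: "('v \<Rightarrow> int \<Rightarrow> 'v \<Rightarrow> 'v) \<Rightarrow> 'v set \<Rightarrow> 'v set" where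
  "rsr01 Y M = {v. \<forall>w. \<exists>m::nat. \<forall>n ns. n \<in> {0, -1} \<and> length ns \<ge> m \<and> set ns \<subseteq> {0, -1}
                     \<longrightarrow> Y (iter Y v ns) n w \<in> M}"

definition sr01 :: "('v \<Rightarrow> int \<Rightarrow> 'v \<Rightarrow> 'v) \<Rightarrow> 'v set \<Rightarrow> 'v set" where
  "sr01 Y M = lsr01 Y M \<inter> rsr01 Y M"

definition MZ01_subspace :: "('v \<Rightarrow> int \<Rightarrow> 'v \<Rightarrow> 'v) \<Rightarrow> 'v set \<Rightarrow> bool" where
  "MZ01_subspace Y M \<longleftrightarrow> r01 Y M = sr01 Y M"

end

theory Submission
  imports Defs
begin

lemma fsum_eq: "finite S \<Longrightarrow> (\<And>i. i \<notin> S \<Longrightarrow> f i = 0) \<Longrightarrow> fsum f = sum f S"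
  unfolding fsum_def
  by (rule sum.mono_neutral_right[symmetric]) auto

lemma fsum_single: "(\<And>i. i \<noteq> k \<Longrightarrow> f i = 0) \<Longrightarrow> fsum f = f k"
  using fsum_eq[of "{k}" f] by auto

lemma fsum_bound: "(\<And>i. i \<ge> N \<Longrightarrow> f i = 0) \<Longrightarrow> fsum f = sum f {..<N}"
  by (rule fsum_eq) auto

lemma gb_m2: "((-2::complex) gchoose j) = (-1)^j * of_nat (j+1)"
proof -
  have "((-2::complex) gchoose j) = (-1)^j * ((of_nat j + 1) gchoose j)"
    by (simp add: gbinomial_negated_upper[of "-2"] add.commute)
  also have "(of_nat j + 1 :: complex) gchoose j = of_nat (j+1)"
    using binomial_gbinomial[of "Suc j" j, where 'a=complex] by (simp add: add.commute)
  finally show ?thesis .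
qed

lemma gb_m1: "((-1::complex) gchoose j) = (-1)^j"
  by (simp add: gbinomial_negated_upper[of "-1"] flip: binomial_gbinomial)

locale VA =
  fixes sc :: "complex \<Rightarrow> 'v::ab_group_add \<Rightarrow> 'v"
    and Y :: "'v \<Rightarrow> int \<Rightarrow> 'v \<Rightarrow> 'v"
    and vac :: 'v
  assumes va: "vertex_algebra sc Y vac"
begin
sublocale vector_space sc using va unfolding vertex_algebra_def by auto

lemma hR: "module_hom sc sc (Y u n)"
  using va unfolding vertex_algebra_def by (simp add: module_hom_iff_linear)
lemma hL: "module_hom sc sc (\<lambda>u. Y u n w)"
  using va unfolding vertex_algebra_def by (simp add: module_hom_iff_linear)

lemma Y0R[simp]: "Y u n 0 = 0" using module_hom.zero[OF hR] .
lemma Y0L[simp]: "Y 0 n w = 0" using module_hom.zero[OF hL[of n w]] by simp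
lemma YaddR: "Y u n (x + y) = Y u n x + Y u n y" using module_hom.add[OF hR] .
lemma YdiffR: "Y u n (x - y) = Y u n x - Y u n y" using module_hom.diff[OF hR] .
lemma YscR: "Y u n (sc c x) = sc c (Y u n x)" using module_hom.scale[OF hR] .
lemma YaddL: "Y (x + y) n w = Y x n w + Y y n w" using module_hom.add[OF hL[of n w]] by simp

lemma trunc: "\<exists>N. \<forall>n\<ge>N. Y u n v = 0" using va unfolding vertex_algebra_def by auto
lemma vacY[simp]: "Y vac n v = (if n = -1 then v else 0)" using va unfolding vertex_algebra_def by auto
lemma Yvac1[simp]: "Y u (-1) vac = u" using va unfolding vertex_algebra_def by auto
lemma Yvac_pos: "n \<ge> 0 \<Longrightarrow> Y u n vac = 0" using va unfolding vertex_algebra_def by auto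

lemma borch: "fsum (\<lambda>i. sc ((of_int m) gchoose i) (Y (Y u (l + int i) v) (m + n - int i) w))
        = fsum (\<lambda>i. sc ((-1) ^ i * ((of_int l) gchoose i))
              (Y u (m + l - int i) (Y v (n + int i) w)
               - sc ((-1) powi l) (Y v (n + l - int i) (Y u (m + int i) w))))"
  using va unfolding vertex_algebra_def by blast

abbreviation "C \<equiv> C2 sc Y"

lemma C_sub: "subspace C" unfolding C2_def by simp
lemma C_gen: "Y u (-2) w \<in> C" unfolding C2_def by (rule span_base) blast

lemma fsum_in: "subspace P \<Longrightarrow> (\<And>i. f i \<in> P) \<Longrightarrow> fsum f \<in> P"
  unfolding fsum_def by (rule subspace_sum) auto

lemma comm_formula: "Y u m (Y v n w) - Y v n (Y u m w) = fsum (\<lambda>i. sc (of_int m gchoose i) (Y (Y u (int i) v) (m + n - int i) w))"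
proof -
  have "fsum (\<lambda>i. sc ((-1) ^ i * ((of_int 0) gchoose i))
              (Y u (m + 0 - int i) (Y v (n + int i) w)
               - sc ((-1) powi 0) (Y v (n + 0 - int i) (Y u (m + int i) w)))) =
        Y u m (Y v n w) - Y v n (Y u m w)"
    by (subst fsum_single[where k=0]) (auto simp: gbinomial_0_left)
  with borch[of m u 0 v n w] show ?thesis by simp
qed

lemma D: "Y u 0 (Y v n w) - Y v n (Y u 0 w) = Y (Y u 0 v) n w"
  unfolding comm_formula by (subst fsum_single[where k=0]) (auto simp: gbinomial_0_left)

lemma deriv_id: "k \<ge> 2 \<Longrightarrow> Y (Y u (-2) vac) (- int k) w = sc (of_nat k) (Y u (- int k - 1) w)"
proof -
  assume k: "k \<ge> 2"
  have L: "fsum (\<lambda>i. sc ((of_int 0) gchoose i) (Y (Y u (-2 + int i) vac) (0 + - int k - int i) w))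
     = Y (Y u (-2) vac) (- int k) w"
    by (subst fsum_single[where k=0]) (auto simp: gbinomial_0_left)
  have R: "fsum (\<lambda>i. sc ((-1) ^ i * ((of_int (-2)) gchoose i))
              (Y u (0 + -2 - int i) (Y vac (- int k + int i) w)
               - sc ((-1) powi (-2)) (Y vac (- int k + -2 - int i) (Y u (0 + int i) w))))
     = sc (of_nat k) (Y u (- int k - 1) w)"
  proof (subst fsum_single[where k="k-1"])
    fix i assume "i \<noteq> k - 1"
    then show "sc ((-1) ^ i * ((of_int (-2)) gchoose i))
              (Y u (0 + -2 - int i) (Y vac (- int k + int i) w)
               - sc ((-1) powi (-2)) (Y vac (- int k + -2 - int i) (Y u (0 + int i) w))) = 0"
      using k by auto
  next
    have e: "- int k + int (k-1) = -1" "0 + -2 - int (k - 1) = - int k - 1" using k by auto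
    have "((-1::complex) ^ (k-1) * ((of_int (-2)) gchoose (k-1))) = of_nat k"
      using k by (simp add: gb_m2 flip: power_mult_distrib)
    then show "sc ((-1) ^ (k-1) * ((of_int (-2)) gchoose (k-1)))
              (Y u (0 + -2 - int (k-1)) (Y vac (- int k + int (k-1)) w)
               - sc ((-1) powi (-2)) (Y vac (- int k + -2 - int (k-1)) (Y u (0 + int (k-1)) w)))
     = sc (of_nat k) (Y u (- int k - 1) w)"
      using k by (simp only: e) simp
  qed
  show ?thesis using borch[of 0 u "-2" vac "- int k" w] L R by simp
qed


lemma F1_nat: "Y u (- int k - 2) w \<in> C"
proof (induction k arbitrary: u w)
  case 0
  then show ?case using C_gen by simp
next
  case (Suc k)
  have "Y (Y u (-2) vac) (- int (k+2)) w = sc (of_nat (k+2)) (Y u (- int (k+2) - 1) w)"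
    by (rule deriv_id) simp
  moreover have "Y (Y u (-2) vac) (- int (k+2)) w \<in> C" using Suc[of "Y u (-2) vac" w] by (simp add: algebra_simps)
  ultimately have "sc (inverse (of_nat (k+2))) (sc (of_nat (k+2)) (Y u (- int (k+2) - 1) w)) \<in> C"
    using subspace_scale[OF C_sub] by metis
  moreover have "inverse (of_nat (k+2)) * (of_nat (k+2)) = (1::complex)" by (intro left_inverse) (metis of_nat_eq_0_iff add_is_0 zero_neq_numeral)
  ultimately have "Y u (- int (k+2) - 1) w \<in> C" by (simp del: of_nat_add)
  then show ?case by (simp add: algebra_simps)
qed

lemma F1: "n \<le> -2 \<Longrightarrow> Y u n w \<in> C"
  using F1_nat[of u "nat (-n-2)" w] by simp

lemma skew: "Y u l v + sc ((-1) powi l) (Y v l u) \<in> C"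
proof -
  let ?p = "(-1::complex) powi l"
  have R: "fsum (\<lambda>i. sc ((-1) ^ i * ((of_int l) gchoose i))
              (Y u (-1 + l - int i) (Y v (0 + int i) vac)
               - sc ((-1) powi l) (Y v (0 + l - int i) (Y u (-1 + int i) vac)))) = - sc ?p (Y v l u)"
  proof (subst fsum_single[where k=0])
    fix i :: nat assume "i \<noteq> 0"
    then show "sc ((-1) ^ i * ((of_int l) gchoose i))
              (Y u (-1 + l - int i) (Y v (0 + int i) vac)
               - sc ((-1) powi l) (Y v (0 + l - int i) (Y u (-1 + int i) vac))) = 0"
      by (simp add: Yvac_pos)
  qed (simp add: Yvac_pos scale_minus_right)
  obtain N0 where N0: "\<forall>n\<ge>N0. Y u n v = 0" using trunc by blast
  define f where "f = (\<lambda>i. sc (of_int (-1) gchoose i) (Y (Y u (l + int i) v) (-1 + 0 - int i) vac))"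
  have "fsum f = sum f {..<Suc (nat (N0 - l))}"
    by (rule fsum_bound) (auto simp: f_def N0)
  also have "\<dots> = f 0 + (\<Sum>i<nat (N0 - l). f (Suc i))" by (rule sum.lessThan_Suc_shift)
  finally have e: "fsum f = Y u l v + (\<Sum>i<nat (N0 - l). f (Suc i))" by (simp add: f_def)
  have S: "(\<Sum>i<nat (N0 - l). f (Suc i)) \<in> C"
    by (rule subspace_sum[OF C_sub]) (auto simp: f_def intro!: subspace_scale[OF C_sub] F1)
  have "Y u l v + (\<Sum>i<nat (N0 - l). f (Suc i)) = - sc ?p (Y v l u)"
    using borch[of "-1" u l v 0 vac] R e unfolding f_def by simp
  then have "Y u l v + sc ?p (Y v l u) = - (\<Sum>i<nat (N0 - l). f (Suc i))"
    by (simp add: algebra_simps eq_neg_iff_add_eq_0)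
  then show ?thesis using subspace_neg[OF C_sub S] by simp
qed


lemma commC: "n \<le> -1 \<Longrightarrow> Y u (-1) (Y v n w) - Y v n (Y u (-1) w) \<in> C"
  unfolding comm_formula
  by (rule fsum_in[OF C_sub], rule subspace_scale[OF C_sub], rule F1) simp

lemma skew1: "Y u (-1) v - Y v (-1) u \<in> C"
  using skew[of u "-1" v] by (simp add: scale_minus_left)

lemma skew0: "Y u 0 v + Y v 0 u \<in> C"
  using skew[of u 0 v] by simp

lemma L1: assumes "s \<in> {0, -1}" "x \<in> C" shows "Y a s x \<in> C"
proof -
  have "C \<subseteq> {x. Y a s x \<in> C}"
    unfolding C2_def
  proof (rule span_minimal)
    show "subspace {x. Y a s x \<in> span {Y u (-2) v |u v. True}}"
      using module_hom.subspace_linear_preimage[OF hR C_sub] unfolding C2_def .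
    show "{Y u (- 2) v |u v. True} \<subseteq> {x. Y a s x \<in> span {Y u (- 2) v |u v. True}}"
    proof clarify
      fix u v
      show "Y a s (Y u (-2) v) \<in> span {Y u (- 2) v |u v. True}"
      proof (cases "s = 0")
        case True
        have "Y a 0 (Y u (-2) v) = Y (Y a 0 u) (-2) v + Y u (-2) (Y a 0 v)"
          using D[of a u "-2" v] by (simp add: algebra_simps)
        moreover have "Y (Y a 0 u) (-2) v + Y u (-2) (Y a 0 v) \<in> C"
          by (rule subspace_add[OF C_sub C_gen C_gen])
        ultimately show ?thesis using True unfolding C2_def by simp
      next
        case False
        then have s: "s = -1" using assms by auto
        have "Y a (-1) (Y u (-2) v) = (Y a (-1) (Y u (-2) v) - Y u (-2) (Y a (-1) v)) + Y u (-2) (Y a (-1) v)"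
          by simp
        moreover have "Y a (-1) (Y u (-2) v) - Y u (-2) (Y a (-1) v) \<in> C" by (rule commC) simp
        moreover have "Y u (-2) (Y a (-1) v) \<in> C" by (rule C_gen)
        ultimately have "Y a (-1) (Y u (-2) v) \<in> C" using subspace_add[OF C_sub] by metis
        then show ?thesis using s unfolding C2_def by simp
      qed
    qed
  qed
  then show ?thesis using assms by auto
qed

lemma R1m: "x \<in> C \<Longrightarrow> Y x (-1) w \<in> C"
proof -
  assume x: "x \<in> C"
  have "Y x (-1) w = (Y x (-1) w - Y w (-1) x) + Y w (-1) x" by simp
  moreover have "Y w (-1) x \<in> C" using L1[of "-1" x w] x by simp
  ultimately show ?thesis using skew1[of x w] subspace_add[OF C_sub] by metis
qed

lemma R10: "x \<in> C \<Longrightarrow> Y x 0 w \<in> C"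
proof -
  assume x: "x \<in> C"
  have "Y x 0 w = (Y x 0 w + Y w 0 x) - Y w 0 x" by simp
  moreover have "Y w 0 x \<in> C" using L1[of 0 x w] x by simp
  ultimately show ?thesis using skew0[of x w] subspace_diff[OF C_sub] by metis
qed


definition T :: "'v \<Rightarrow> nat \<Rightarrow> 'v" where "T v k = iter Y v (replicate k (-1))"

lemma iter_Cons[simp]: "iter Y v (n # ns) = Y v n (iter Y v ns)" by (simp add: iter_def)
lemma iter_Nil[simp]: "iter Y v [] = v" by (simp add: iter_def)
lemma T0[simp]: "T v 0 = v" by (simp add: T_def)
lemma T_Suc: "T v (Suc k) = Y v (-1) (T v k)" by (simp add: T_def)

lemma P_T: "(Y v (-1) ^^ j) (T v k) = T v (j + k)"
  by (induction j) (simp_all add: T_Suc)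
lemma P_diff: "(Y v (-1) ^^ j) (a - b) = (Y v (-1) ^^ j) a - (Y v (-1) ^^ j) b"
  by (induction j) (simp_all add: YdiffR)
lemma P_add: "(Y v (-1) ^^ j) (a + b) = (Y v (-1) ^^ j) a + (Y v (-1) ^^ j) b"
  by (induction j) (simp_all add: YaddR)
lemma P_C: "x \<in> C \<Longrightarrow> (Y v (-1) ^^ j) x \<in> C"
  by (induction j) (simp_all add: L1)
lemma P_comm: "(Y v (-1) ^^ j) (Y x (-1) y) - Y x (-1) ((Y v (-1) ^^ j) y) \<in> C"
proof (induction j)
  case 0
  then show ?case using subspace_0[OF C_sub] by simp
next
  case (Suc j)
  let ?a = "(Y v (-1) ^^ j) (Y x (-1) y)" and ?b = "(Y v (-1) ^^ j) y"
  have e: "(Y v (-1) ^^ Suc j) (Y x (-1) y) - Y x (-1) ((Y v (-1) ^^ Suc j) y)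
     = Y v (-1) (?a - Y x (-1) ?b) + (Y v (-1) (Y x (-1) ?b) - Y x (-1) (Y v (-1) ?b))"
    by (simp add: YdiffR)
  have "Y v (-1) (?a - Y x (-1) ?b) \<in> C" using L1[of "-1"] Suc by simp
  moreover have "Y v (-1) (Y x (-1) ?b) - Y x (-1) (Y v (-1) ?b) \<in> C" by (rule commC) simp
  ultimately show ?case unfolding e by (rule subspace_add[OF C_sub])
qed

lemma vv0: "Y v 0 v \<in> C"
proof -
  have "Y v 0 v + Y v 0 v \<in> C" by (rule skew0)
  then have "sc (1/2) (Y v 0 v + Y v 0 v) \<in> C" by (rule subspace_scale[OF C_sub])
  moreover have "sc (1/2) (Y v 0 v + Y v 0 v) = Y v 0 v"
    by (simp add: scale_right_distrib flip: scale_left_distrib)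
  ultimately show ?thesis by simp
qed

lemma zero_case: "Y v 0 (T v k) \<in> C"
proof (induction k)
  case 0
  then show ?case using vv0 by simp
next
  case (Suc k)
  have "Y v 0 (T v (Suc k)) = Y (Y v 0 v) (-1) (T v k) + Y v (-1) (Y v 0 (T v k))"
    using D[of v v "-1" "T v k"] by (simp add: T_Suc algebra_simps)
  moreover have "Y (Y v 0 v) (-1) (T v k) \<in> C" using R1m vv0 by blast
  moreover have "Y v (-1) (Y v 0 (T v k)) \<in> C" using L1[of "-1"] Suc by simp
  ultimately show ?case using subspace_add[OF C_sub] by metis
qed

lemma dich: "set ns \<subseteq> {0, -1} \<Longrightarrow> iter Y v ns \<in> C \<or> iter Y v ns = T v (length ns)"
proof (induction ns)
  case Nil
  then show ?case by simp
next
  case (Cons n ns)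
  then have n: "n \<in> {0, -1}" and IH: "iter Y v ns \<in> C \<or> iter Y v ns = T v (length ns)" by auto
  show ?case
  proof (cases "iter Y v ns \<in> C")
    case True
    then show ?thesis using L1[OF n] by simp
  next
    case False
    then have e: "iter Y v ns = T v (length ns)" using IH by blast
    show ?thesis
    proof (cases "n = 0")
      case True
      then show ?thesis using e zero_case by simp
    next
      case False
      then have "n = -1" using n by simp
      then show ?thesis using e by (simp add: T_Suc)
    qed
  qed
qed

context
  fixes M
  assumes subM: "subspace M" and CM: "C \<subseteq> M" and idM: "\<And>a x. x \<in> M \<Longrightarrow> Y a (-1) x \<in> M"
begin

lemma modM: "a - b \<in> C \<Longrightarrow> b \<in> M \<Longrightarrow> a \<in> M"
proof -
  assume "a - b \<in> C" "b \<in> M"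
  then have "(a - b) + b \<in> M" using CM subspace_add[OF subM] by blast
  then show ?thesis by simp
qed

lemma Q:
  assumes hm: "\<And>k. k \<ge> m \<Longrightarrow> T v k \<in> M"
  shows "m + 1 \<le> j + k \<Longrightarrow> (Y v (-1) ^^ j) (Y b 0 (T v k)) \<in> M"
proof (induction k arbitrary: j)
  case 0
  let ?x = "Y b 0 v"
  obtain j' where j: "j = Suc j'" and j': "j' \<ge> m" using 0 by (cases j) auto
  have e: "(Y v (-1) ^^ j) (Y b 0 (T v 0)) = (Y v (-1) ^^ j') (Y v (-1) ?x)"
    unfolding j funpow_Suc_right by simp
  let ?B = "(Y v (-1) ^^ j') (Y ?x (-1) v)"
  have "Y ?x (-1) (T v j') \<in> M" using idM hm j' by blast
  moreover have "?B - Y ?x (-1) (T v j') \<in> C" using P_comm[where v=v and j=j' and x="?x" and y=v] P_T[where v=v and j=j' and k=0] by simp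
  ultimately have B: "?B \<in> M" using modM by blast
  have "(Y v (-1) ^^ j') (Y v (-1) ?x) - ?B \<in> C"
    unfolding P_diff[symmetric] by (rule P_C) (rule skew1)
  then show ?case unfolding e using B modM by blast
next
  case (Suc k)
  let ?x = "Y b 0 v"
  have "Y b 0 (T v (Suc k)) = Y ?x (-1) (T v k) + Y v (-1) (Y b 0 (T v k))"
    using D[of b v "-1" "T v k"] by (simp add: T_Suc algebra_simps)
  then have e: "(Y v (-1) ^^ j) (Y b 0 (T v (Suc k))) =
      (Y v (-1) ^^ j) (Y ?x (-1) (T v k)) + (Y v (-1) ^^ Suc j) (Y b 0 (T v k))"
    by (simp add: P_add funpow_swap1)
  have "(Y v (-1) ^^ Suc j) (Y b 0 (T v k)) \<in> M" using Suc.IH[of "Suc j"] Suc.prems by (simp del: funpow.simps)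
  moreover have "(Y v (-1) ^^ j) (Y ?x (-1) (T v k)) \<in> M"
  proof -
    have "Y ?x (-1) (T v (j + k)) \<in> M" using idM hm Suc.prems by simp
    then show ?thesis using P_comm[where v=v and j=j and x="?x" and y="T v k"] P_T[where v=v and j=j and k=k] modM by simp
  qed
  ultimately show ?case unfolding e using subspace_add[OF subM] by blast
qed

lemma bzero:
  assumes hm: "\<And>k. k \<ge> m \<Longrightarrow> T v k \<in> M" and t: "t \<ge> m + 1"
  shows "Y b 0 (T v t) \<in> M"
  using Q[OF hm, where j=0 and k=t and b=b] t by simp

lemma sr_r: "sr01 Y M \<subseteq> r01 Y M"
proof
  fix v assume "v \<in> sr01 Y M"
  then have "v \<in> lsr01 Y M" by (simp add: sr01_def)
  then obtain m where m: "\<forall>s ns. s \<in> {0, -1} \<and> length ns \<ge> m \<and> set ns \<subseteq> {0, -1}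
                     \<longrightarrow> Y vac s (iter Y v ns) \<in> M" unfolding lsr01_def by blast
  show "v \<in> r01 Y M" unfolding r01_def
  proof (intro CollectI exI allI impI)
    fix ns :: "int list" assume "m \<le> length ns \<and> set ns \<subseteq> {0, - 1}"
    then show "iter Y v ns \<in> M" using m[rule_format, of "-1" ns] by simp
  qed
qed

lemma r_sr: "r01 Y M \<subseteq> sr01 Y M"
proof
  fix v assume "v \<in> r01 Y M"
  then obtain m where m: "\<And>ns. length ns \<ge> m \<Longrightarrow> set ns \<subseteq> {0, -1} \<Longrightarrow> iter Y v ns \<in> M"
    unfolding r01_def by blast
  have hm: "\<And>k. k \<ge> m \<Longrightarrow> T v k \<in> M"
    unfolding T_def by (rule m) auto
  have lsr: "v \<in> lsr01 Y M" unfolding lsr01_def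
  proof (intro CollectI allI exI impI)
    fix b and s :: int and ns :: "int list"
    assume a: "s \<in> {0, -1} \<and> Suc m \<le> length ns \<and> set ns \<subseteq> {0, -1}"
    show "Y b s (iter Y v ns) \<in> M"
    proof (cases "iter Y v ns \<in> C")
      case True
      then show ?thesis using L1 a CM by blast
    next
      case False
      then have e: "iter Y v ns = T v (length ns)" using dich a by blast
      show ?thesis
      proof (cases "s = 0")
        case True
        then show ?thesis unfolding e using bzero[OF hm] a by simp
      next
        case False
        then have "s = -1" using a by simp
        then show ?thesis unfolding e using idM hm a by simp
      qed
    qed
  qed
  have rsr: "v \<in> rsr01 Y M" unfolding rsr01_def
  proof (intro CollectI allI exI impI)
    fix w and n :: int and ns :: "int list"
    assume a: "n \<in> {0, -1} \<and> Suc m \<le> length ns \<and> set ns \<subseteq> {0, -1}"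
    show "Y (iter Y v ns) n w \<in> M"
    proof (cases "iter Y v ns \<in> C")
      case True
      then show ?thesis using R1m R10 a CM by blast
    next
      case False
      then have e: "iter Y v ns = T v (length ns)" using dich a by blast
      let ?t = "T v (length ns)"
      show ?thesis
      proof (cases "n = 0")
        case True
        have "Y w 0 ?t \<in> M" using bzero[OF hm] a by simp
        then have "- Y w 0 ?t \<in> M" by (rule subspace_neg[OF subM])
        moreover have "Y ?t 0 w - (- Y w 0 ?t) \<in> C" using skew0[of ?t w] by simp
        ultimately show ?thesis unfolding e True using modM by blast
      next
        case False
        then have n: "n = -1" using a by simp
        have "Y w (-1) ?t \<in> M" using idM hm a by simp
        moreover have "Y ?t (-1) w - Y w (-1) ?t \<in> C" by (rule skew1)
        ultimately show ?thesis unfolding e n using modM by blast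
      qed
    qed
  qed
  show "v \<in> sr01 Y M" using lsr rsr by (simp add: sr01_def)
qed

lemma MZ: "MZ01_subspace Y M"
  unfolding MZ01_subspace_def using r_sr sr_r by blast

end

end

theorem mainTheorem9:
  fixes sc :: "complex \<Rightarrow> 'v::ab_group_add \<Rightarrow> 'v"
    and Y :: "'v \<Rightarrow> int \<Rightarrow> 'v \<Rightarrow> 'v"
    and vac :: 'v
    and M :: "'v set"
  assumes "vertex_algebra sc Y vac"
    and "module.subspace sc M"
    and "C2 sc Y \<subseteq> M"
    and "quotient_ideal sc Y M"
  shows "MZ01_subspace Y M"
proof -
  interpret VA sc Y vac by (rule VA.intro) (rule assms(1))
  show ?thesis
    by (rule MZ[of M]) (use assms in \<open>auto simp: quotient_ideal_def\<close>)
qed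

end
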